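(* Let $\nu>-1$ be real and let $0<a<b$ be two consecutive positive zeros of $J_\nu(\cdot;q^2)$. Then each of the functions $J_{\nu-1}(\cdot;q^2)$ and $J_{\nu+1}(\cdot;q^2)$ has at least one zero in the open interval $(a,b)$.
   Context: Fix $0<q<1$. For $a\in\mathbb C$ put $(a;q)_0=1$, $(a;q)_k=\prod_{i=0}^{k-1}(1-aq^i)$, $(a;q)_\infty=\prod_{i\ge0}(1-aq^i)$. For $\nu\in\mathbb C$ and $x\in\mathbb C\setminus\{0\}$ the Hahn–Exton $q$-Bessel function is $$J_\nu(x;q^2)=\frac{x^\nu}{(q^2;q^2)_\infty}\sum_{k=0}^\infty\frac{(-1)^kq^{k(k+1)}(q^{2\nu+2k+2};q^2)_\infty}{(q^2;q^2)_k}\,x^{2k},$$ with $x^\nu=\exp(\nu\operatorname{Log}x)$ (principal branch). *)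

theory Defs
  imports "HOL-Analysis.Analysis"
begin

definition qpoch :: "complex \<Rightarrow> real \<Rightarrow> nat \<Rightarrow> complex" where
  "qpoch a p k = (\<Prod>i<k. 1 - a * complex_of_real (p ^ i))"

definition qpoch_inf :: "complex \<Rightarrow> real \<Rightarrow> complex" where
  "qpoch_inf a p = (\<Prod>i. 1 - a * complex_of_real (p ^ i))"

definition ppow :: "complex \<Rightarrow> complex \<Rightarrow> complex" where
  "ppow x nu = exp (nu * Ln x)"

text \<open>Hahn--Exton q-Bessel function J_nu(x; q^2), for x \<noteq> 0.\<close>

definition hahn_exton_J :: "real \<Rightarrow> complex \<Rightarrow> complex \<Rightarrow> complex" where
  "hahn_exton_J q nu x =
     ppow x nu / qpoch_inf (complex_of_real (q^2)) (q^2) *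
     (\<Sum>k. (-1)^k * complex_of_real (q ^ (k * (k + 1))) *
           qpoch_inf (complex_of_real (q ^ (2 * k + 2)) * exp ((2 * nu) * Ln (complex_of_real q))) (q^2)
           / qpoch (complex_of_real (q^2)) (q^2) k * x ^ (2 * k))"

end

theory Submission
  imports Defs
begin
lemma ratio_summable:
  fixes q r t :: real and c :: "nat \<Rightarrow> real"
  assumes q: "0 < p" "p < 1" and r: "0 < r" "r * p < 1"
    and R: "\<And>k. c (Suc k) * (1 - p ^ Suc k) * (1 - r * p ^ Suc k) = - (p ^ Suc k) * c k"
  shows "summable (\<lambda>n. c n * t ^ n)"
proof -
  define K where "K = \<bar>t\<bar> / ((1 - p) * (1 - r * p))"
  have "(\<lambda>n. p ^ n * K) \<longlonglongrightarrow> 0 * K"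
    by (intro tendsto_mult LIMSEQ_power_zero) (use q in auto)
  then have "eventually (\<lambda>n. p ^ n * K < 1/2) sequentially"
    by (intro order_tendstoD) auto
  then obtain N where N: "\<And>n. n \<ge> N \<Longrightarrow> p ^ n * K < 1/2"
    by (auto simp: eventually_sequentially)
  show ?thesis
  proof (rule summable_ratio_test[of "1/2" N])
    fix n assume n: "N \<le> n"
    have pn: "0 < p ^ Suc n" "p ^ Suc n \<le> p" using q
      by (auto simp: power_le_one intro!: mult_left_le[of "p ^ n" p] )
    have d1: "1 - p \<le> 1 - p ^ Suc n" using pn by auto
    have d2: "1 - r * p \<le> 1 - r * p ^ Suc n" using pn r by (auto intro: mult_left_mono)
    have pos1: "0 < 1 - p" "0 < 1 - r * p" using q r by auto
    have ce: "c (Suc n) = - (p ^ Suc n) * c n / ((1 - p ^ Suc n) * (1 - r * p ^ Suc n))"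
    proof -
      have nz: "(1 - p ^ Suc n) * (1 - r * p ^ Suc n) \<noteq> 0" using d1 d2 pos1 by auto
      have "c (Suc n) = (c (Suc n) * ((1 - p ^ Suc n) * (1 - r * p ^ Suc n))) / ((1 - p ^ Suc n) * (1 - r * p ^ Suc n))"
        by (rule nonzero_mult_div_cancel_right[OF nz, symmetric])
      also have "\<dots> = - (p ^ Suc n) * c n / ((1 - p ^ Suc n) * (1 - r * p ^ Suc n))"
        using R[of n] by (simp only: mult.assoc)
      finally show ?thesis .
    qed
    have "norm (c (Suc n) * t ^ Suc n) = p ^ Suc n * \<bar>t\<bar> / ((1 - p ^ Suc n) * (1 - r * p ^ Suc n)) * norm (c n * t ^ n)"
    proof -
      have Dpos: "0 < (1 - p ^ Suc n) * (1 - r * p ^ Suc n)" using d1 d2 pos1 by auto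
      have "norm (c (Suc n) * t ^ Suc n) = \<bar>- (p ^ Suc n) * c n\<bar> / \<bar>(1 - p ^ Suc n) * (1 - r * p ^ Suc n)\<bar> * (\<bar>t\<bar> * \<bar>t\<bar> ^ n)"
        by (simp add: ce abs_mult power_abs abs_divide del: mult_minus_left)
      also have "\<dots> = p ^ Suc n * \<bar>t\<bar> / ((1 - p ^ Suc n) * (1 - r * p ^ Suc n)) * norm (c n * t ^ n)"
      proof -
        have "0 < 1 - p ^ Suc n" "0 < 1 - r * p ^ Suc n" using d1 d2 pos1 by auto
        then show ?thesis using pn by (simp add: abs_mult power_abs)
      qed
      finally show ?thesis .
    qed
    also have "\<dots> \<le> p ^ Suc n * K * norm (c n * t ^ n)"
    proof (rule mult_right_mono)
      have le: "(1 - p) * (1 - r * p) \<le> (1 - p ^ Suc n) * (1 - r * p ^ Suc n)"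
        using d1 d2 pos1 by (intro mult_mono) auto
      have "p ^ Suc n * \<bar>t\<bar> / ((1 - p ^ Suc n) * (1 - r * p ^ Suc n)) \<le> p ^ Suc n * \<bar>t\<bar> / ((1 - p) * (1 - r * p))"
      proof (rule divide_left_mono)
        have "0 < (1 - p) * (1 - r * p)" using pos1 by simp
        then show "0 < (1 - p ^ Suc n) * (1 - r * p ^ Suc n) * ((1 - p) * (1 - r * p))"
          using le by (metis mult_pos_pos less_le_trans)
      qed (use le pn in auto)
      then show "p ^ Suc n * \<bar>t\<bar> / ((1 - p ^ Suc n) * (1 - r * p ^ Suc n)) \<le> p ^ Suc n * K"
        by (simp add: K_def)
    qed auto
    also have "\<dots> \<le> 1/2 * norm (c n * t ^ n)"
      using N[of "Suc n"] n by (intro mult_right_mono) auto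
    finally show "norm (c (Suc n) * t ^ Suc n) \<le> 1/2 * norm (c n * t ^ n)" .
  qed auto
qed

lemma cont_bound:
  fixes g :: "real \<Rightarrow> real"
  assumes "\<And>x. isCont g x"
  shows "\<exists>B>0. \<forall>x\<in>{a..b}. \<bar>g x\<bar> \<le> B"
proof -
  have "continuous_on {a..b} g" using assms by (intro continuous_at_imp_continuous_on) auto
  then have "compact (g ` {a..b})" by (intro compact_continuous_image) auto
  then have "bounded (g ` {a..b})" by (rule compact_imp_bounded)
  then show ?thesis unfolding bounded_pos by auto
qed

lemma abs_aux:
  fixes c e1 e2 e3 e4 E E0 :: real
  assumes "\<bar>e1 - c\<bar> \<le> E" "\<bar>e2 - c\<bar> \<le> E" "\<bar>e3 - c\<bar> \<le> E" "\<bar>e4 - c\<bar> \<le> E" "E \<le> E0"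
  shows "\<bar>e1 * e2 - e3 * e4\<bar> \<le> (4 * \<bar>c\<bar> + 2 * E0) * E"
proof -
  define d1 d2 d3 d4 where "d1 = e1 - c" "d2 = e2 - c" "d3 = e3 - c" "d4 = e4 - c"
  have E: "0 \<le> E" using assms(1) by linarith
  have eq: "e1 * e2 - e3 * e4 = c * (d1 + d2 - d3 - d4) + d1 * d2 - d3 * d4"
    by (simp add: d1_d2_d3_d4_def algebra_simps)
  have b1: "\<bar>c * (d1 + d2 - d3 - d4)\<bar> \<le> \<bar>c\<bar> * (4 * E)"
    unfolding abs_mult using assms d1_d2_d3_d4_def by (intro mult_left_mono) auto
  have b2: "\<bar>d1 * d2\<bar> \<le> E0 * E" unfolding abs_mult
    using assms d1_d2_d3_d4_def E by (intro mult_mono) auto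
  have b3: "\<bar>d3 * d4\<bar> \<le> E0 * E" unfolding abs_mult
    using assms d1_d2_d3_d4_def E by (intro mult_mono) auto
  show ?thesis unfolding eq using b1 b2 b3 by (simp add: algebra_simps)
qed

lemma sign_change:
  fixes g :: "real \<Rightarrow> real"
  assumes "\<And>x. isCont g x" "a < b" "g a * g b < 0"
  shows "\<exists>x. a < x \<and> x < b \<and> g x = 0"
proof (cases "g a < 0")
  case True
  then have "g b > 0" using assms(3) by (auto simp: mult_less_0_iff)
  then obtain x where "a \<le> x" "x \<le> b" "g x = 0"
    using IVT[of g a 0 b] True assms by auto
  then show ?thesis using True \<open>g b > 0\<close> by (metis less_le less_irrefl)
next
  case False
  then have "g a > 0" "g b < 0" using assms(3) by (auto simp: mult_less_0_iff)
  then obtain x where "a \<le> x" "x \<le> b" "g x = 0"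
    using IVT2[of g b 0 a] assms by auto
  then show ?thesis using \<open>g a > 0\<close> \<open>g b < 0\<close> by (metis less_le less_irrefl)
qed

lemma sign3:
  fixes A B u v :: real
  assumes "A * u > 0" "B * v < 0" "u * v > 0"
  shows "A * B < 0"
proof -
  have "(A * u) * (B * v) < 0" using assms by (simp add: mult_pos_neg)
  then have "(A * B) * (u * v) < 0" by (simp add: algebra_simps)
  show ?thesis
  proof (rule ccontr)
    assume "\<not> A * B < 0"
    then have "0 \<le> A * B" by simp
    then have "0 \<le> (A * B) * (u * v)" using assms(3) by simp
    then show False using \<open>(A * B) * (u * v) < 0\<close> by simp
  qed
qed

locale qbes =
  fixes q r :: real and c :: "nat \<Rightarrow> real"
  assumes q: "0 < q" "q < 1" and r: "0 < r" "r * q^2 < 1" and c0: "c 0 \<noteq> 0"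
  and R: "\<And>k. c (Suc k) * (1 - (q^2) ^ Suc k) * (1 - r * (q^2) ^ Suc k) = - ((q^2) ^ Suc k) * c k"
begin

definition F where "F t = (\<Sum>n. c n * t ^ n)"
definition f where "f x = F (x^2)"

lemma p: "0 < q^2" "q^2 < 1" using q by (auto simp: power_less_one_iff)

lemma summ: "summable (\<lambda>n. c n * t ^ n)"
  using ratio_summable[OF p r R] by blast

lemma F_sums: "(\<lambda>n. c n * t ^ n) sums F t"
  unfolding F_def using summ by (rule summable_sums)

lemma isCont_F: "isCont F t"
  unfolding F_def[abs_def] by (rule isCont_powser_converges_everywhere) (rule summ)

lemma isCont_f: "isCont f x"
  unfolding f_def[abs_def] by (intro continuous_intros isCont_o2[OF _ isCont_F])

lemma F_qdiff: "F (t / q^2) + r * F (q^2 * t) = (1 + r - t) * F t"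
proof -
  define p where "p = q^2"
  have pp: "0 < p" "p < 1" using p by (auto simp: p_def)
  define e where "e n = c n * (t/p)^n + r * (c n * (p*t)^n) - (1+r) * (c n * t^n)" for n
  have "e sums (F (t/p) + r * F (p*t) - (1+r) * F t)"
    unfolding e_def by (intro sums_diff sums_add sums_mult F_sums)
  moreover have "e 0 = 0" by (simp add: e_def algebra_simps)
  ultimately have s1: "(\<lambda>n. e (Suc n)) sums (F (t/p) + r * F (p*t) - (1+r) * F t)"
    by (simp add: sums_Suc_iff)
  have "e (Suc n) = - t * (c n * t ^ n)" for n
  proof -
    define P where "P = p ^ Suc n"
    have P: "0 < P" using pp by (simp add: P_def)
    have "e (Suc n) = c (Suc n) * (1 - P) * (1 - r * P) * t ^ Suc n / P"
      unfolding e_def P_def using pp by (simp add: field_simps power_divide power_mult_distrib)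
    also have "\<dots> = - P * c n * t ^ Suc n / P"
      using R[of n] by (simp add: P_def p_def)
    also have "\<dots> = - t * (c n * t ^ n)" using P by simp
    finally show ?thesis .
  qed
  then have s2: "(\<lambda>n. e (Suc n)) sums (- t * F t)"
    by (simp only:) (intro sums_mult F_sums)
  have "F (t/p) + r * F (p*t) - (1+r) * F t = - t * F t"
    using sums_unique2[OF s1 s2] .
  then show ?thesis unfolding p_def by (simp add: algebra_simps)
qed

lemma f_qdiff: "f (x / q) + r * f (q * x) = (1 + r - x^2) * f x"
  using F_qdiff[of "x^2"] q by (simp add: f_def power_divide power_mult_distrib mult.commute)


lemma F_tail: "F t = c 0 + t * (\<Sum>n. c (Suc n) * t ^ n)"
  unfolding F_def using powser_split_head(1)[OF summ, of t] by (simp add: mult.commute)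

lemma isCont_tail: "isCont (\<lambda>t. \<Sum>n. c (Suc n) * t ^ n) t"
  by (rule isCont_powser_converges_everywhere) (rule powser_split_head(3)[OF summ])

lemma f_near0: "\<exists>K\<ge>0. \<forall>x. \<bar>x\<bar> \<le> X \<longrightarrow> \<bar>f x - c 0\<bar> \<le> K * x^2"
proof -
  obtain K where K: "K > 0" "\<forall>t\<in>{-(X^2)..X^2}. \<bar>\<Sum>n. c (Suc n) * t ^ n\<bar> \<le> K"
    using cont_bound[OF isCont_tail, of "-(X^2)" "X^2"] by blast
  have "\<bar>f x - c 0\<bar> \<le> K * x^2" if "\<bar>x\<bar> \<le> X" for x
  proof -
    have "x^2 \<le> X^2" using that by (metis abs_ge_zero power2_abs power_mono)
    then have "\<bar>\<Sum>n. c (Suc n) * (x^2) ^ n\<bar> \<le> K" using K(2) by auto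
    then show ?thesis unfolding f_def F_tail[of "x^2"]
      by (simp add: abs_mult mult.commute[of K] mult_left_mono)
  qed
  then show ?thesis using K(1) less_imp_le by blast
qed

lemma f_bound: "\<exists>B>0. \<forall>x. \<bar>x\<bar> \<le> X \<longrightarrow> \<bar>f x\<bar> \<le> B"
proof -
  obtain B where "B > 0" "\<And>t. t \<in> {-X..X} \<Longrightarrow> \<bar>f t\<bar> \<le> B"
    using cont_bound[OF isCont_f, of "-X" X] by auto
  then show ?thesis by (metis abs_le_iff atLeastAtMost_iff minus_le_iff)
qed

definition D where "D \<alpha> \<beta> x = f (\<alpha> * x / q) * f (\<beta> * x) - f (\<alpha> * x) * f (\<beta> * x / q)"

lemma D_step: "D \<alpha> \<beta> x - r * D \<alpha> \<beta> (q * x) = (\<beta>^2 - \<alpha>^2) * x^2 * f (\<alpha> * x) * f (\<beta> * x)"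
proof -
  have e1: "f (\<alpha> * x / q) = (1 + r - (\<alpha>*x)^2) * f (\<alpha>*x) - r * f (q * (\<alpha> * x))"
    using f_qdiff[of "\<alpha>*x"] by simp
  have e2: "f (\<beta> * x / q) = (1 + r - (\<beta>*x)^2) * f (\<beta>*x) - r * f (q * (\<beta> * x))"
    using f_qdiff[of "\<beta>*x"] by simp
  have qq: "\<alpha> * (q * x) / q = \<alpha> * x" "\<beta> * (q * x) / q = \<beta> * x" using q by auto
  have m: "q * (\<alpha> * x) = \<alpha> * (q * x)" "q * (\<beta> * x) = \<beta> * (q * x)" by auto
  show ?thesis unfolding D_def qq e1 e2 m by (simp add: algebra_simps power2_eq_square)
qed

lemma telescope:
  "(\<beta>^2 - \<alpha>^2) * (\<Sum>k<N. (r*q^2)^k * (f (\<alpha> * q^k) * f (\<beta> * q^k))) = D \<alpha> \<beta> 1 - r^N * D \<alpha> \<beta> (q^N)"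
proof (induction N)
  case 0 then show ?case by simp
next
  case (Suc N)
  have st: "D \<alpha> \<beta> (q^N) - r * D \<alpha> \<beta> (q * q^N) = (\<beta>^2 - \<alpha>^2) * (q^N)^2 * f (\<alpha> * q^N) * f (\<beta> * q^N)"
    by (rule D_step)
  have "(\<beta>^2 - \<alpha>^2) * (\<Sum>k<Suc N. (r*q^2)^k * (f (\<alpha> * q^k) * f (\<beta> * q^k)))
      = (D \<alpha> \<beta> 1 - r^N * D \<alpha> \<beta> (q^N)) + r^N * ((\<beta>^2 - \<alpha>^2) * (q^N)^2 * f (\<alpha> * q^N) * f (\<beta> * q^N))"
    using Suc.IH by (simp add: algebra_simps power_mult_distrib power_mult[symmetric] mult.commute[of 2])
  also have "\<dots> = D \<alpha> \<beta> 1 - r^Suc N * D \<alpha> \<beta> (q^Suc N)"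
    unfolding st[symmetric] by (simp add: algebra_simps)
  finally show ?case .
qed


lemma Dlim: "(\<lambda>N. r^N * D \<alpha> \<beta> (q^N)) \<longlonglongrightarrow> 0"
proof -
  define X where "X = (\<bar>\<alpha>\<bar> + \<bar>\<beta>\<bar>) / q"
  have X0: "X \<ge> 0" using q by (simp add: X_def)
  obtain K where K: "K \<ge> 0" "\<And>x. \<bar>x\<bar> \<le> X \<Longrightarrow> \<bar>f x - c 0\<bar> \<le> K * x^2"
    using f_near0[of X] by blast
  define E where "E N = K * X^2 * (q^2)^N" for N
  have arg: "\<bar>f s - c 0\<bar> \<le> E N" if "\<bar>s\<bar> \<le> X * q^N" for s N
  proof -
    have qN: "0 < q^N" "q^N \<le> 1" using q by (auto simp: power_le_one)
    have "X * q^N \<le> X" using qN X0 by (simp add: mult_left_le)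
    then have "\<bar>f s - c 0\<bar> \<le> K * s^2" using K(2) that by auto
    also have "s^2 \<le> (X * q^N)^2" using that by (metis abs_ge_zero power2_abs power_mono)
    then have "K * s^2 \<le> K * (X * q^N)^2" using K(1) by (rule mult_left_mono)
    also have "\<dots> = E N" by (simp add: E_def power_mult_distrib power_mult[symmetric] mult.commute[of 2] mult.assoc)
    finally show ?thesis .
  qed
  have E0: "0 \<le> E N" "E N \<le> K * X^2" for N
    using q K(1) by (auto simp: E_def power_le_one intro!: mult_left_le)
  define C where "C = (4 * \<bar>c 0\<bar> + 2 * (K * X^2)) * (K * X^2)"
  have bound: "norm (r^N * D \<alpha> \<beta> (q^N)) \<le> C * (r * q^2)^N" for N
  proof -
    have qN: "0 < q^N" using q by auto
    have a1: "\<bar>\<alpha> * q^N / q\<bar> \<le> X * q^N" using q qN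
      by (simp add: X_def abs_mult field_simps)
    have a2: "\<bar>\<beta> * q^N\<bar> \<le> X * q^N" using q qN
    proof -
      have "q * (\<bar>\<beta>\<bar> * q ^ N) \<le> \<bar>\<beta>\<bar> * q ^ N" using q qN by (intro mult_left_le_one_le) auto
      moreover have "0 \<le> \<bar>\<alpha>\<bar> * q ^ N" using qN by simp
      ultimately have h: "q * (\<bar>\<beta>\<bar> * q ^ N) \<le> \<bar>\<alpha>\<bar> * q ^ N + \<bar>\<beta>\<bar> * q ^ N" by linarith
      show ?thesis using q qN h by (simp add: X_def abs_mult field_simps)
    qed
    have a3: "\<bar>\<alpha> * q^N\<bar> \<le> X * q^N"
    proof -
      have "q * (\<bar>\<alpha>\<bar> * q ^ N) \<le> \<bar>\<alpha>\<bar> * q ^ N" using q qN by (intro mult_left_le_one_le) auto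
      moreover have "0 \<le> \<bar>\<beta>\<bar> * q ^ N" using qN by simp
      ultimately have h: "q * (\<bar>\<alpha>\<bar> * q ^ N) \<le> \<bar>\<alpha>\<bar> * q ^ N + \<bar>\<beta>\<bar> * q ^ N" by linarith
      show ?thesis using q qN h by (simp add: X_def abs_mult field_simps)
    qed
    have a4: "\<bar>\<beta> * q^N / q\<bar> \<le> X * q^N" using q qN
      by (simp add: X_def abs_mult field_simps)
    have "\<bar>D \<alpha> \<beta> (q^N)\<bar> \<le> (4 * \<bar>c 0\<bar> + 2 * (K * X^2)) * E N"
      unfolding D_def
      by (rule abs_aux[OF arg[OF a1] arg[OF a2] arg[OF a3] arg[OF a4] E0(2)])
    then have "\<bar>D \<alpha> \<beta> (q^N)\<bar> \<le> C * (q^2)^N" by (simp add: C_def E_def mult.assoc)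
    then have "r^N * \<bar>D \<alpha> \<beta> (q^N)\<bar> \<le> r^N * (C * (q^2)^N)" using r by (intro mult_left_mono) auto
    then show ?thesis using r by (simp add: abs_mult power_mult_distrib mult.commute mult.left_commute)
  qed
  have "(\<lambda>N. C * (r * q^2)^N) \<longlonglongrightarrow> C * 0"
    using r by (intro tendsto_mult tendsto_const LIMSEQ_power_zero) auto
  then show ?thesis
    by (intro Lim_null_comparison[OF always_eventually[OF allI[OF bound]]]) simp
qed


definition S where "S \<alpha> \<beta> = (\<Sum>k. (r*q^2)^k * (f (\<alpha> * q^k) * f (\<beta> * q^k)))"

lemma w: "0 < r * q^2" "r * q^2 < 1" using r q by auto

lemma S_unif:
  assumes "\<bar>\<alpha>\<bar> \<le> X"
  shows "continuous_on {-X..X} (S \<alpha>)"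
    and "\<And>\<beta>. \<beta> \<in> {-X..X} \<Longrightarrow> summable (\<lambda>k. (r*q^2)^k * (f (\<alpha> * q^k) * f (\<beta> * q^k)))"
proof -
  obtain B where B: "B > 0" "\<And>x. \<bar>x\<bar> \<le> X \<Longrightarrow> \<bar>f x\<bar> \<le> B"
    using f_bound[of X] by blast
  have qk: "0 < q^k" "q^k \<le> 1" for k :: nat using q by (auto simp: power_le_one)
  have sm: "\<bar>s * q^k\<bar> \<le> X" if "\<bar>s\<bar> \<le> X" for s k
    using that qk[of k] by (simp add: abs_mult) (meson abs_ge_zero mult_left_le order_trans)
  have bd: "norm ((r*q^2)^i * (f (\<alpha> * q^i) * f (\<beta> * q^i))) \<le> (r*q^2)^i * (B * B)"
    if "\<beta> \<in> {-X..X}" for i \<beta>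
  proof -
    have "\<bar>\<beta>\<bar> \<le> X" using that by auto
    then have "\<bar>f (\<alpha> * q^i)\<bar> \<le> B" "\<bar>f (\<beta> * q^i)\<bar> \<le> B" using B(2) sm assms by auto
    then have "\<bar>f (\<alpha> * q^i) * f (\<beta> * q^i)\<bar> \<le> B * B" unfolding abs_mult
      by (intro mult_mono) auto
    then show ?thesis using w by (simp add: abs_mult mult_left_mono)
  qed
  have sg: "summable (\<lambda>i. (r*q^2)^i * (B * B))"
    using w by (intro summable_mult2 summable_geometric) auto
  have ul: "uniform_limit {-X..X} (\<lambda>n \<beta>. \<Sum>i<n. (r*q^2)^i * (f (\<alpha> * q^i) * f (\<beta> * q^i)))
      (\<lambda>\<beta>. \<Sum>i. (r*q^2)^i * (f (\<alpha> * q^i) * f (\<beta> * q^i))) sequentially"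
    by (rule Weierstrass_m_test[OF bd sg])
  have ct: "continuous_on {-X..X} (\<lambda>\<beta>. \<Sum>i<n. (r*q^2)^i * (f (\<alpha> * q^i) * f (\<beta> * q^i)))" for n
    by (intro continuous_on_sum continuous_on_mult continuous_on_const
        continuous_at_imp_continuous_on ballI isCont_o2[OF _ isCont_f] continuous_intros)
  show "continuous_on {-X..X} (S \<alpha>)"
    unfolding S_def[abs_def]
    by (rule uniform_limit_theorem[OF always_eventually[OF allI[OF ct]] ul]) simp
  show "summable (\<lambda>k. (r*q^2)^k * (f (\<alpha> * q^k) * f (\<beta> * q^k)))" if "\<beta> \<in> {-X..X}" for \<beta>
    by (rule summable_comparison_test'[OF sg]) (use bd[OF that] in auto)
qed

lemma S_eq: "(\<beta>^2 - \<alpha>^2) * S \<alpha> \<beta> = D \<alpha> \<beta> 1"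
proof -
  have "summable (\<lambda>k. (r*q^2)^k * (f (\<alpha> * q^k) * f (\<beta> * q^k)))"
    by (rule S_unif(2)[of \<alpha> "\<bar>\<alpha>\<bar> + \<bar>\<beta>\<bar>"]) auto
  then have "(\<lambda>N. \<Sum>k<N. (r*q^2)^k * (f (\<alpha> * q^k) * f (\<beta> * q^k))) \<longlonglongrightarrow> S \<alpha> \<beta>"
    unfolding S_def by (rule summable_LIMSEQ)
  then have l1: "(\<lambda>N. (\<beta>^2 - \<alpha>^2) * (\<Sum>k<N. (r*q^2)^k * (f (\<alpha> * q^k) * f (\<beta> * q^k)))) \<longlonglongrightarrow> (\<beta>^2 - \<alpha>^2) * S \<alpha> \<beta>"
    by (intro tendsto_mult tendsto_const)
  have "(\<lambda>N. D \<alpha> \<beta> 1 - r^N * D \<alpha> \<beta> (q^N)) \<longlonglongrightarrow> D \<alpha> \<beta> 1 - 0"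
    by (intro tendsto_diff tendsto_const Dlim)
  then have l2: "(\<lambda>N. (\<beta>^2 - \<alpha>^2) * (\<Sum>k<N. (r*q^2)^k * (f (\<alpha> * q^k) * f (\<beta> * q^k)))) \<longlonglongrightarrow> D \<alpha> \<beta> 1"
    unfolding telescope by simp
  show ?thesis using LIMSEQ_unique[OF l1 l2] .
qed

lemma f0: "f 0 = c 0" by (simp add: f_def F_def)

lemma S_pos: "S \<alpha> \<alpha> > 0"
proof -
  have "(\<lambda>k. \<alpha> * q^k) \<longlonglongrightarrow> \<alpha> * 0"
    using q by (intro tendsto_mult tendsto_const LIMSEQ_power_zero) auto
  then have "(\<lambda>k. f (\<alpha> * q^k)) \<longlonglongrightarrow> f 0"
    using isCont_tendsto_compose[OF isCont_f] by simp
  then have "eventually (\<lambda>k. f (\<alpha> * q^k) \<noteq> 0) sequentially"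
    using c0 f0 by (intro tendsto_imp_eventually_ne) auto
  then obtain k where k: "f (\<alpha> * q^k) \<noteq> 0" by (auto simp: eventually_sequentially)
  have sm: "summable (\<lambda>k. (r*q^2)^k * (f (\<alpha> * q^k) * f (\<alpha> * q^k)))"
    by (rule S_unif(2)[of \<alpha> "\<bar>\<alpha>\<bar>"]) auto
  show ?thesis unfolding S_def
  proof (rule suminf_pos2[OF sm, of k])
    show "0 \<le> (r*q^2)^n * (f (\<alpha> * q^n) * f (\<alpha> * q^n))" for n
      using w by simp
    have "0 < f (\<alpha> * q^k) * f (\<alpha> * q^k)" using k by (metis not_real_square_gt_zero)
    then show "0 < (r*q^2)^k * (f (\<alpha> * q^k) * f (\<alpha> * q^k))" using w by simp
  qed
qed

lemma key:
  assumes "f \<alpha> = 0"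
  shows "\<exists>d>0. \<forall>\<beta>. \<bar>\<beta> - \<alpha>\<bar> < d \<longrightarrow> f (\<alpha>/q) * f \<beta> = (\<beta>^2 - \<alpha>^2) * S \<alpha> \<beta> \<and> S \<alpha> \<beta> > 0"
proof -
  define X where "X = \<bar>\<alpha>\<bar> + 1"
  have co: "continuous_on {-X..X} (S \<alpha>)" by (rule S_unif(1)) (simp add: X_def)
  have "\<alpha> \<in> interior {-X..X}" by (auto simp: X_def)
  then have ic: "isCont (S \<alpha>) \<alpha>" using co continuous_on_interior by blast
  have "eventually (\<lambda>\<beta>. S \<alpha> \<beta> > 0) (at \<alpha>)"
    using ic S_pos[of \<alpha>] unfolding isCont_def by (intro order_tendstoD) auto
  then obtain d where d: "d > 0" "\<And>\<beta>. \<beta> \<noteq> \<alpha> \<Longrightarrow> dist \<beta> \<alpha> < d \<Longrightarrow> S \<alpha> \<beta> > 0"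
    unfolding eventually_at by blast
  have "S \<alpha> \<beta> > 0" if "\<bar>\<beta> - \<alpha>\<bar> < d" for \<beta>
    using d(2)[of \<beta>] S_pos[of \<alpha>] that by (cases "\<beta> = \<alpha>") (auto simp: dist_real_def)
  moreover have "f (\<alpha>/q) * f \<beta> = (\<beta>^2 - \<alpha>^2) * S \<alpha> \<beta>" for \<beta>
    using S_eq[of \<beta> \<alpha>] assms by (simp add: D_def)
  ultimately show ?thesis using d(1) by blast
qed

lemma interlace:
  assumes ab: "0 < a" "a < b" and fa: "f a = 0" and fb: "f b = 0"
    and nz: "\<And>x. a < x \<Longrightarrow> x < b \<Longrightarrow> f x \<noteq> 0"
  shows "f (a/q) * f (b/q) < 0"
proof -
  obtain d1 where d1: "d1 > 0" "\<And>\<beta>. \<bar>\<beta> - a\<bar> < d1 \<Longrightarrow> f (a/q) * f \<beta> = (\<beta>^2 - a^2) * S a \<beta> \<and> S a \<beta> > 0"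
    using key[OF fa] by blast
  obtain d2 where d2: "d2 > 0" "\<And>\<beta>. \<bar>\<beta> - b\<bar> < d2 \<Longrightarrow> f (b/q) * f \<beta> = (\<beta>^2 - b^2) * S b \<beta> \<and> S b \<beta> > 0"
    using key[OF fb] by blast
  obtain e1 where m1: "0 < e1" "e1 \<le> d1" "e1 \<le> b - a" using d1(1) ab
    by (metis min.cobounded1 min.cobounded2 min_less_iff_conj diff_gt_0_iff_gt)
  obtain e2 where m2: "0 < e2" "e2 \<le> d2" "e2 \<le> b - a" using d2(1) ab
    by (metis min.cobounded1 min.cobounded2 min_less_iff_conj diff_gt_0_iff_gt)
  define b1 where "b1 = a + e1 / 2"
  define b2 where "b2 = b - e2 / 2"
  have b1: "a < b1" "b1 < b" "\<bar>b1 - a\<bar> < d1" using ab m1 unfolding b1_def by (auto simp: abs_less_iff)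
  have b2: "a < b2" "b2 < b" "\<bar>b2 - b\<bar> < d2" using ab m2 unfolding b2_def by (auto simp: abs_less_iff)
  have b12: "b1 \<le> b2" using ab m1 m2 unfolding b1_def b2_def by auto
  have sq1: "b1^2 - a^2 > 0" using b1 ab by (simp add: power_strict_mono)
  have sq2: "b2^2 - b^2 < 0" using b2 ab by (simp add: power_strict_mono)
  have A: "f (a/q) * f b1 > 0" using d1(2)[OF b1(3)] sq1 by simp
  have B: "f (b/q) * f b2 < 0" using d2(2)[OF b2(3)] sq2 by (simp add: mult_neg_pos)
  have u: "f b1 * f b2 > 0"
  proof (rule ccontr)
    assume "\<not> f b1 * f b2 > 0"
    moreover have "f b1 \<noteq> 0" "f b2 \<noteq> 0" using nz b1 b2 by auto
    ultimately have neg: "f b1 * f b2 < 0" by (simp add: linorder_not_less le_less)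
    then have "b1 \<noteq> b2" by (auto simp: mult_less_0_iff)
    then have "b1 < b2" using b12 by simp
    from sign_change[OF isCont_f this neg] obtain x where "b1 < x" "x < b2" "f x = 0" by blast
    then show False using nz b1 b2 by auto
  qed
  show ?thesis using sign3[OF A B u] .
qed

end

lemma G_rel:
  fixes c d :: "nat \<Rightarrow> real"
  assumes p: "0 < p" and sc: "\<And>t. summable (\<lambda>n. c n * t ^ n)" and sd: "summable (\<lambda>n. d n * t ^ n)"
    and dc: "\<And>k. d k = - c (Suc k) * (1 - p ^ Suc k) / p ^ Suc k"
  shows "t * (\<Sum>n. d n * t ^ n) = (\<Sum>n. c n * t ^ n) - (\<Sum>n. c n * (t/p) ^ n)"
proof -
  define e where "e n = c n * t ^ n - c n * (t/p) ^ n" for n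
  have "e sums ((\<Sum>n. c n * t ^ n) - (\<Sum>n. c n * (t/p) ^ n))"
    unfolding e_def by (intro sums_diff summable_sums sc)
  moreover have "e 0 = 0" by (simp add: e_def)
  ultimately have s1: "(\<lambda>n. e (Suc n)) sums ((\<Sum>n. c n * t ^ n) - (\<Sum>n. c n * (t/p) ^ n))"
    by (simp add: sums_Suc_iff)
  have "e (Suc n) = t * (d n * t ^ n)" for n
  proof -
    define P where "P = p ^ Suc n"
    have P: "P \<noteq> 0" using p by (simp add: P_def)
    have "e (Suc n) = c (Suc n) * t ^ Suc n - c (Suc n) * t ^ Suc n / P"
      unfolding e_def P_def by (simp add: power_divide)
    also have "\<dots> = t * (d n * t ^ n)"
      unfolding dc P_def[symmetric] using P by (simp add: field_simps)
    finally show ?thesis .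
  qed
  then have s2: "(\<lambda>n. e (Suc n)) sums (t * (\<Sum>n. d n * t ^ n))"
    by (simp only:) (intro sums_mult summable_sums sd)
  show ?thesis using sums_unique2[OF s2 s1] .
qed

lemma H_rel:
  fixes c :: "nat \<Rightarrow> real"
  assumes sc: "\<And>t. summable (\<lambda>n. c n * t ^ n)"
  shows "(\<lambda>n. (c n * (1 - r * p ^ n)) * t ^ n) sums ((\<Sum>n. c n * t ^ n) - r * (\<Sum>n. c n * (p * t) ^ n))"
proof -
  have "(\<lambda>n. c n * t ^ n - r * (c n * (p * t) ^ n)) sums ((\<Sum>n. c n * t ^ n) - r * (\<Sum>n. c n * (p * t) ^ n))"
    by (intro sums_diff sums_mult summable_sums sc)
  then show ?thesis by (simp add: algebra_simps power_mult_distrib)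
qed

definition Qr :: "real \<Rightarrow> real \<Rightarrow> real" where "Qr p z = (\<Prod>i. 1 - z * p ^ i)"

lemma Qr_conv: fixes p z :: real assumes "0 < p" "p < 1" shows "convergent_prod (\<lambda>i. 1 - z * p ^ i)"
proof -
  have "summable (\<lambda>i. \<bar>z\<bar> * p ^ i)" using assms by (intro summable_mult summable_geometric) auto
  then have "summable (\<lambda>i. norm ((1 - z * p ^ i) - 1))" using assms by (simp add: abs_mult)
  then show ?thesis by (intro abs_convergent_prod_imp_convergent_prod summable_imp_abs_convergent_prod)
qed

lemma Qr_shift: fixes p z :: real assumes "0 < p" "p < 1" shows "Qr p z = (1 - z) * Qr p (z * p)"
proof -
  have "(\<lambda>i. 1 - z * p ^ i) has_prod ((\<Prod>k<1. 1 - z * p ^ k) * (\<Prod>k. 1 - z * p ^ (k + 1)))"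
    by (rule has_prod_ignore_initial_segment'[OF Qr_conv[OF assms]])
  then have "Qr p z = (1 - z) * (\<Prod>k. 1 - z * p ^ (k + 1))"
    unfolding Qr_def by (simp add: has_prod_unique[symmetric])
  moreover have "(\<Prod>k. 1 - z * p ^ (k + 1)) = (\<Prod>k. 1 - z * p * p ^ k)"
    by (simp add: mult_ac)
  ultimately show ?thesis unfolding Qr_def by simp
qed

lemma Qr_nz: fixes p z :: real assumes "0 < p" "p < 1" "\<bar>z\<bar> < 1" shows "Qr p z \<noteq> 0"
  unfolding Qr_def
proof (rule prodinf_nonzero[OF Qr_conv[OF assms(1,2)]])
  fix i
  have "\<bar>z * p ^ i\<bar> < 1"
  proof -
    have "p ^ i \<le> 1" using assms by (simp add: power_le_one)
    then have "\<bar>z\<bar> * p ^ i \<le> \<bar>z\<bar>" using assms by (simp add: mult_left_le)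
    then show ?thesis using assms by (simp add: abs_mult)
  qed
  then show "1 - z * p ^ i \<noteq> 0" by auto
qed

lemma qpoch_inf_real: fixes p z :: real assumes "0 < p" "p < 1"
  shows "qpoch_inf (complex_of_real z) p = complex_of_real (Qr p z)"
proof -
  have "(\<lambda>i. 1 - z * p ^ i) has_prod Qr p z"
    unfolding Qr_def using Qr_conv[OF assms] by (simp add: convergent_prod_has_prod_iff)
  then have "(\<lambda>i. complex_of_real (1 - z * p ^ i)) has_prod complex_of_real (Qr p z)"
    by (subst has_prod_of_real_iff)
  then show ?thesis unfolding qpoch_inf_def by (simp add: has_prod_unique[symmetric])
qed

lemma qpoch_real: "qpoch (complex_of_real p) p k = complex_of_real (\<Prod>i<k. 1 - p ^ Suc i)"
  unfolding qpoch_def by simp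


definition cf :: "real \<Rightarrow> real \<Rightarrow> nat \<Rightarrow> real" where
  "cf q \<nu> k = (-1)^k * q^(k*(k+1)) * Qr (q^2) (q^(2*k+2) * q powr (2*\<nu>)) / (\<Prod>i<k. 1 - (q^2) ^ Suc i)"

lemma exp_Ln_q: assumes "0 < q" shows "exp ((2 * complex_of_real \<nu>) * Ln (complex_of_real q)) = complex_of_real (q powr (2*\<nu>))"
proof -
  have L: "Ln (complex_of_real q) = complex_of_real (ln q)" using Ln_of_real[OF assms] by simp
  have "exp ((2 * complex_of_real \<nu>) * Ln (complex_of_real q)) = exp (complex_of_real (2 * \<nu> * ln q))"
    unfolding L by simp
  also have "\<dots> = complex_of_real (exp (2 * \<nu> * ln q))" by (rule exp_of_real)
  also have "exp (2 * \<nu> * ln q) = q powr (2*\<nu>)" using assms by (simp add: powr_def)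
  finally show ?thesis .
qed

lemma J_formula:
  assumes q: "0 < q" "q < 1" and sm: "summable (\<lambda>k. cf q \<nu> k * (y^2)^k)"
  shows "hahn_exton_J q (complex_of_real \<nu>) (complex_of_real y) =
    ppow (complex_of_real y) (complex_of_real \<nu>) / qpoch_inf (complex_of_real (q^2)) (q^2) * complex_of_real (\<Sum>k. cf q \<nu> k * (y^2)^k)"
proof -
  have p: "0 < q^2" "q^2 < 1" using q by (auto simp: power_less_one_iff)
  have tm: "(-1)^k * complex_of_real (q ^ (k * (k + 1))) *
           qpoch_inf (complex_of_real (q ^ (2 * k + 2)) * exp ((2 * complex_of_real \<nu>) * Ln (complex_of_real q))) (q^2)
           / qpoch (complex_of_real (q^2)) (q^2) k * (complex_of_real y) ^ (2 * k)
        = complex_of_real (cf q \<nu> k * (y^2)^k)" for k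
  proof -
    have "qpoch_inf (complex_of_real (q ^ (2 * k + 2)) * exp ((2 * complex_of_real \<nu>) * Ln (complex_of_real q))) (q^2)
        = complex_of_real (Qr (q^2) (q^(2*k+2) * q powr (2*\<nu>)))"
      unfolding exp_Ln_q[OF q(1)] of_real_mult[symmetric] by (rule qpoch_inf_real[OF p])
    moreover have "qpoch (complex_of_real (q^2)) (q^2) k = complex_of_real (\<Prod>i<k. 1 - (q^2) ^ Suc i)"
      by (rule qpoch_real)
    ultimately show ?thesis unfolding cf_def by (simp add: power_mult)
  qed
  have "(\<lambda>k. complex_of_real (cf q \<nu> k * (y^2)^k)) sums complex_of_real (\<Sum>k. cf q \<nu> k * (y^2)^k)"
    using summable_sums[OF sm] by (subst sums_of_real_iff)
  then have "(\<Sum>k. complex_of_real (cf q \<nu> k * (y^2)^k)) = complex_of_real (\<Sum>k. cf q \<nu> k * (y^2)^k)"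
    by (rule sums_unique[symmetric])
  then show ?thesis unfolding hahn_exton_J_def tm by simp
qed


lemma powr_succ: fixes q \<nu> :: real shows "0 < q \<Longrightarrow> q powr (2 * (\<nu> + 1)) = q powr (2 * \<nu>) * q^2"
  by (simp add: distrib_left powr_add)

lemma powr_pred: fixes q \<nu> :: real shows "0 < q \<Longrightarrow> q powr (2 * (\<nu> - 1)) = q powr (2 * \<nu>) / q^2"
  by (simp add: right_diff_distrib powr_diff)

lemma powr_lt1: fixes q e :: real shows "0 < q \<Longrightarrow> q < 1 \<Longrightarrow> e > 0 \<Longrightarrow> q powr e < 1"
proof -
  assume a: "0 < q" "q < 1" "e > 0"
  then have "ln q < 0" by simp
  then have "e * ln q < 0" using a by (simp add: mult_pos_neg)
  then show ?thesis using a by (simp add: powr_def)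
qed

lemma Pk_pos: fixes q :: real shows "0 < q \<Longrightarrow> q < 1 \<Longrightarrow> 0 < (\<Prod>i<k. 1 - (q^2) ^ Suc i)"
proof (intro prod_pos ballI)
  fix i assume "0 < q" "q < 1"
  then have "0 < q^2" "q^2 < 1" by (auto simp: power_less_one_iff)
  then have "(q^2) ^ Suc i < 1" by (rule power_Suc_less_one)
  then show "0 < 1 - (q^2) ^ Suc i" by simp
qed

lemma cf_R:
  assumes q: "0 < q" "q < 1"
  shows "cf q \<nu> (Suc k) * (1 - (q^2) ^ Suc k) * (1 - q powr (2*\<nu>) * (q^2) ^ Suc k) = - ((q^2) ^ Suc k) * cf q \<nu> k"
proof -
  define p where "p = q^2"
  define r where "r = q powr (2*\<nu>)"
  define A where "A = q^(2*k+2) * r"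
  define Pk where "Pk = (\<Prod>i<k. 1 - p ^ Suc i)"
  have pp: "0 < p" "p < 1" using q by (auto simp: p_def power_less_one_iff)
  have Pk: "0 < Pk" unfolding Pk_def p_def using Pk_pos[OF q] .
  have P1: "0 < 1 - p ^ Suc k" using power_Suc_less_one[OF pp] by simp
  have e1: "q^(2*Suc k+2) * r = A * p" by (simp add: A_def p_def power_add power_mult_distrib mult_ac power2_eq_square)
  have e3: "q^(Suc k * (Suc k + 1)) = q^(k*(k+1)) * p ^ Suc k"
  proof -
    have "Suc k * (Suc k + 1) = k*(k+1) + 2 * Suc k" by simp
    then show ?thesis by (simp only: power_add power_mult p_def)
  qed
  have e4: "(\<Prod>i<Suc k. 1 - p ^ Suc i) = Pk * (1 - p ^ Suc k)" by (simp add: Pk_def)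
  have e5: "A = r * p ^ Suc k"
  proof -
    have "p ^ Suc k = q ^ (2 * Suc k)" unfolding p_def by (rule power_mult[symmetric])
    then have "p ^ Suc k = q ^ (2*k+2)" by simp
    then show ?thesis by (simp add: A_def mult.commute)
  qed
  have sh: "Qr p A = (1 - A) * Qr p (A * p)" by (rule Qr_shift[OF pp])
  have cS: "cf q \<nu> (Suc k) = (-1)^Suc k * (q^(k*(k+1)) * p ^ Suc k) * Qr p (A * p) / (Pk * (1 - p ^ Suc k))"
    unfolding cf_def using e1 e3 e4 by (simp add: p_def r_def)
  have ck: "cf q \<nu> k = (-1)^k * q^(k*(k+1)) * ((1 - A) * Qr p (A * p)) / Pk"
    unfolding cf_def sh[symmetric] by (simp add: p_def r_def A_def Pk_def)
  show ?thesis unfolding cS ck p_def[symmetric] r_def[symmetric] e5[symmetric]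
    using Pk P1 by (simp add: field_simps)
qed

lemma cf_qbes:
  assumes q: "0 < q" "q < 1" and nu: "\<nu> > -1"
  shows "qbes q (q powr (2*\<nu>)) (cf q \<nu>)"
proof
  show "0 < q" "q < 1" by (fact q)+
  show "0 < q powr (2*\<nu>)" using q by simp
  have "q powr (2*\<nu>) * q^2 = q powr (2 * (\<nu> + 1))" using powr_succ[OF q(1)] by simp
  also have "\<dots> < 1" using q nu by (intro powr_lt1) auto
  finally show rq: "q powr (2*\<nu>) * q^2 < 1" .
  have pp: "0 < q^2" "q^2 < 1" using q by (auto simp: power_less_one_iff)
  have "\<bar>q^(2*0+2) * q powr (2*\<nu>)\<bar> < 1" using rq q by (simp add: mult.commute power2_eq_square)
  then show "cf q \<nu> 0 \<noteq> 0" unfolding cf_def using Qr_nz[OF pp] by simp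
  show "cf q \<nu> (Suc k) * (1 - (q^2) ^ Suc k) * (1 - q powr (2*\<nu>) * (q^2) ^ Suc k) = - ((q^2) ^ Suc k) * cf q \<nu> k" for k
    by (rule cf_R[OF q])
qed

lemma cf_succ:
  assumes q: "0 < q" "q < 1"
  shows "cf q (\<nu> + 1) k = - cf q \<nu> (Suc k) * (1 - (q^2) ^ Suc k) / (q^2) ^ Suc k"
proof -
  define p where "p = q^2"
  define Pk where "Pk = (\<Prod>i<k. 1 - p ^ Suc i)"
  have pp: "0 < p" "p < 1" using q by (auto simp: p_def power_less_one_iff)
  have Pk: "0 < Pk" unfolding Pk_def p_def using Pk_pos[OF q] .
  have P1: "0 < 1 - p ^ Suc k" using power_Suc_less_one[OF pp] by simp
  have e1: "q^(2*k+2) * q powr (2 * (\<nu> + 1)) = q^(2*Suc k+2) * q powr (2*\<nu>)"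
    using powr_succ[OF q(1)] by (simp add: power_add mult_ac power2_eq_square)
  have e3: "q^(Suc k * (Suc k + 1)) = q^(k*(k+1)) * p ^ Suc k"
  proof -
    have "Suc k * (Suc k + 1) = k*(k+1) + 2 * Suc k" by simp
    then show ?thesis by (simp only: power_add power_mult p_def)
  qed
  have e4: "(\<Prod>i<Suc k. 1 - p ^ Suc i) = Pk * (1 - p ^ Suc k)" by (simp add: Pk_def)
  show ?thesis unfolding cf_def e1 p_def[symmetric] e3 e4 Pk_def[symmetric]
    using Pk P1 pp by (simp add: field_simps)
qed

lemma cf_pred:
  assumes q: "0 < q" "q < 1"
  shows "cf q (\<nu> - 1) k = cf q \<nu> k * (1 - q powr (2*\<nu>) * (q^2) ^ k)"
proof -
  have pp: "0 < q^2" "q^2 < 1" using q by (auto simp: power_less_one_iff)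
  have e1: "q^(2*k+2) * q powr (2 * (\<nu> - 1)) = q powr (2*\<nu>) * (q^2) ^ k"
  proof -
    have "q^(2*k+2) = (q^2)^k * q^2" by (simp add: power_add power_mult power2_eq_square)
    then show ?thesis using powr_pred[OF q(1), of \<nu>] q by simp
  qed
  have e2: "q powr (2*\<nu>) * (q^2) ^ k * q^2 = q^(2*k+2) * q powr (2*\<nu>)"
  proof -
    have "(q^2) ^ Suc k = q ^ (2 * Suc k)" by (rule power_mult[symmetric])
    then have "(q^2) ^ k * q^2 = q ^ (2*k+2)" by (simp add: mult.commute)
    then show ?thesis by (simp add: mult_ac)
  qed
  show ?thesis unfolding cf_def e1 Qr_shift[OF pp, of "q powr (2*\<nu>) * (q^2) ^ k"] e2
    by (simp add: field_simps)
qed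


theorem lemma3p6:
  fixes q nu a b :: real
  assumes q: "0 < q" "q < 1"
    and nu: "nu > -1"
    and ab: "0 < a" "a < b"
    and za: "hahn_exton_J q (complex_of_real nu) (complex_of_real a) = 0"
    and zb: "hahn_exton_J q (complex_of_real nu) (complex_of_real b) = 0"
    and consec: "\<forall>x. a < x \<and> x < b \<longrightarrow> hahn_exton_J q (complex_of_real nu) (complex_of_real x) \<noteq> 0"
  shows "(\<exists>x. a < x \<and> x < b \<and> hahn_exton_J q (complex_of_real (nu - 1)) (complex_of_real x) = 0)
       \<and> (\<exists>x. a < x \<and> x < b \<and> hahn_exton_J q (complex_of_real (nu + 1)) (complex_of_real x) = 0)"
proof -
  define r where "r = q powr (2*nu)"
  interpret Q0: qbes q r "cf q nu" unfolding r_def by (rule cf_qbes[OF q nu])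
  interpret Q1: qbes q "q powr (2*(nu+1))" "cf q (nu+1)" by (rule cf_qbes[OF q]) (use nu in simp)
  have pp: "0 < q^2" "q^2 < 1" using q by (auto simp: power_less_one_iff)
  define Qc where "Qc = qpoch_inf (complex_of_real (q^2)) (q^2)"
  have Qc: "Qc \<noteq> 0"
  proof -
    have "Qc = complex_of_real (Qr (q^2) (q^2))" unfolding Qc_def by (rule qpoch_inf_real[OF pp])
    moreover have "Qr (q^2) (q^2) \<noteq> 0" using pp by (intro Qr_nz) auto
    ultimately show ?thesis by simp
  qed
  have Jz: "hahn_exton_J q (complex_of_real \<mu>) (complex_of_real y) = 0 \<longleftrightarrow> (\<Sum>k. cf q \<mu> k * (y^2)^k) = 0"
    if sm: "summable (\<lambda>k. cf q \<mu> k * (y^2)^k)" for \<mu> y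
  proof -
    have "ppow (complex_of_real y) (complex_of_real \<mu>) \<noteq> 0" by (simp add: ppow_def)
    then show ?thesis unfolding J_formula[OF q sm] Qc_def[symmetric] using Qc by simp
  qed
  have fJ: "hahn_exton_J q (complex_of_real nu) (complex_of_real y) = 0 \<longleftrightarrow> Q0.f y = 0" for y
    using Jz[OF Q0.summ] by (simp add: Q0.f_def Q0.F_def)
  have fa: "Q0.f a = 0" and fb: "Q0.f b = 0" using za zb fJ by auto
  have nz: "Q0.f x \<noteq> 0" if "a < x" "x < b" for x using consec that fJ by auto
  have main: "Q0.f (a/q) * Q0.f (b/q) < 0" by (rule Q0.interlace[OF ab fa fb nz])
  have Grel: "y^2 * Q1.f y = Q0.f y - Q0.f (y/q)" for y
  proof -
    have "y^2 * (\<Sum>n. cf q (nu+1) n * (y^2) ^ n) = (\<Sum>n. cf q nu n * (y^2) ^ n) - (\<Sum>n. cf q nu n * (y^2/q^2) ^ n)"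
      by (rule G_rel[OF pp(1) Q0.summ Q1.summ cf_succ[OF q]])
    then show ?thesis by (simp add: Q0.f_def Q0.F_def Q1.f_def Q1.F_def power_divide)
  qed
  have ga: "Q1.f a = - Q0.f (a/q) / a^2" using Grel[of a] fa ab by (simp add: field_simps)
  have gb: "Q1.f b = - Q0.f (b/q) / b^2" using Grel[of b] fb ab by (simp add: field_simps)
  have "Q1.f a * Q1.f b = (Q0.f (a/q) * Q0.f (b/q)) / (a^2 * b^2)" unfolding ga gb by simp
  also have "\<dots> < 0" using main ab by (intro divide_neg_pos) auto
  finally obtain x1 where x1: "a < x1" "x1 < b" "Q1.f x1 = 0"
    using sign_change[OF Q1.isCont_f ab(2)] by blast
  have J1: "hahn_exton_J q (complex_of_real (nu + 1)) (complex_of_real x1) = 0"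
    using Jz[OF Q1.summ] x1(3) by (simp add: Q1.f_def Q1.F_def)
  define h where "h y = Q0.f y - r * Q0.f (q * y)" for y
  have hs: "(\<lambda>n. cf q (nu - 1) n * (y^2) ^ n) sums h y" for y
  proof -
    have "(\<lambda>n. (cf q nu n * (1 - r * (q^2) ^ n)) * (y^2) ^ n) sums ((\<Sum>n. cf q nu n * (y^2) ^ n) - r * (\<Sum>n. cf q nu n * (q^2 * y^2) ^ n))"
      by (rule H_rel[OF Q0.summ])
    then show ?thesis unfolding cf_pred[OF q] r_def[symmetric] h_def
      by (simp add: Q0.f_def Q0.F_def power_mult_distrib)
  qed
  have hc: "isCont h y" for y unfolding h_def[abs_def]
    by (intro continuous_intros Q0.isCont_f isCont_o2[OF _ Q0.isCont_f])
  have hq: "h y = Q0.f (y/q)" if "Q0.f y = 0" for y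
    using Q0.f_qdiff[of y] that by (simp add: h_def)
  have "h a * h b < 0" using main hq[OF fa] hq[OF fb] by simp
  then obtain x2 where x2: "a < x2" "x2 < b" "h x2 = 0"
    using sign_change[OF hc ab(2)] by blast
  have J2: "hahn_exton_J q (complex_of_real (nu - 1)) (complex_of_real x2) = 0"
    using Jz[OF sums_summable[OF hs]] x2(3) sums_unique[OF hs] by simp
  show ?thesis using x1 J1 x2 J2 by blast
qed

end
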